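(* Let $m_x,m_y$ be positive integers, $\Delta\xi,\Delta\eta>0$, and let $\vec X:\mathbb R^2\to\mathbb R^2$ be a smooth map with nowhere vanishing Jacobian determinant such that $\vec X(\xi+m_x\Delta\xi,\eta)-\vec X(\xi,\eta)$ and $\vec X(\xi,\eta+m_y\Delta\eta)-\vec X(\xi,\eta)$ are constant vectors. Index pressure points by $(i,j)\in\mathbb Z_{m_x}\times\mathbb Z_{m_y}$ (indices taken modulo $m_x$, $m_y$), with weights ${\tt dVc}_{i,j}=\Delta\xi\Delta\eta\,|\det D\vec X(i\Delta\xi,j\Delta\eta)|$. Suppose that at every east face $(i,j)$, with computational location $\vec\xi^e_{i,j}=((i+\tfrac12)\Delta\xi,j\Delta\eta)$, a vector $\vec u^e_{i,j}\in\mathbb R^2$ is given, and at every north face $(i,j)$, with location $\vec\xi^n_{i,j}=(i\Delta\xi,(j+\tfrac12)\Delta\eta)$, a vector $\vec u^n_{i,j}\in\mathbb R^2$ is given. For $\varepsilon\in\{\tfrac12,\tfrac32,\dots\}$ define $$\overline{F}^e_{i,j}(\varepsilon)=-\frac{1}{\varepsilon}\Big(\vec X\big(\vec\xi^e_{i,j}+\varepsilon(0,\Delta\eta)\big)-\vec X\big(\vec\xi^e_{i,j}-\varepsilon(0,\Delta\eta)\big)\Big)^\perp\cdot\vec u^e_{i,j},$$ $$\overline{F}^n_{i,j}(\varepsilon)=\frac{1}{\varepsilon}\Big(\vec X\big(\vec\xi^n_{i,j}+\varepsilon(\Delta\xi,0)\big)-\vec X\big(\vec\xi^n_{i,j}-\varepsilon(\Delta\xi,0)\big)\Big)^\perp\cdot\vec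 u^n_{i,j},$$ where $(a,b)^\perp=(-b,a)$, and for a positive integer $K$ and real coefficients $\alpha(\tfrac12),\dots,\alpha(K-\tfrac12)$ define $$({\sf DIV})_{i,j}=\frac{1}{2\,{\tt dVc}_{i,j}}\sum_{\varepsilon\in\{1/2,\dots,K-1/2\}}\alpha(\varepsilon)\Big(\overline F^e_{i+\varepsilon-1/2,\,j}(\varepsilon)-\overline F^e_{i-\varepsilon-1/2,\,j}(\varepsilon)+\overline F^n_{i,\,j+\varepsilon-1/2}(\varepsilon)-\overline F^n_{i,\,j-\varepsilon-1/2}(\varepsilon)\Big).$$ Then (a) $\sum_{i,j}{\tt dVc}_{i,j}({\sf DIV})_{i,j}=0$ for all choices of the face vectors; and (b) if there is a constant $\vec c\in\mathbb R^2$ with $\vec u^e_{i,j}=\vec u^n_{i,j}=\vec c$ for all $(i,j)$, then $({\sf DIV})_{i,j}=0$ for all $(i,j)$.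
   Context: This is the finite-difference discrete divergence on a periodic, structured, curvilinear staggered 2D grid: the face vectors $\vec u^e,\vec u^n$ are the full velocity vectors reconstructed at the faces from staggered grid-aligned velocity components by interpolations that are exact for constant vector fields, so that for the discrete representation of a constant vector field $\vec c$ they all equal $\vec c$. Property (a) is the discrete statement that the integral of a divergence vanishes; property (b) is the statement that the discrete divergence of a constant vector field vanishes. *)

theory Defs
  imports "HOL-Analysis.Analysis"
begin

definition pt :: "real \<Rightarrow> real \<Rightarrow> real^2" where
  "pt a b = vector [a, b]"

definition perp :: "real^2 \<Rightarrow> real^2" where
  "perp v = vector [- (v$2), v$1]"

fun Ck :: "nat \<Rightarrow> (real^2 \<Rightarrow> real) \<Rightarrow> bool" where
  "Ck 0 f = continuous_on UNIV f"
| "Ck (Suc k) f = (continuous_on UNIV f \<and>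
     (\<forall>d::2. \<exists>g. (\<forall>x. ((\<lambda>t. f (x + t *\<^sub>R axis d 1)) has_real_derivative g x) (at 0))
                 \<and> Ck k g))"

definition smooth_map :: "(real^2 \<Rightarrow> real^2) \<Rightarrow> bool" where
  "smooth_map X = (\<forall>k. \<forall>c::2. Ck k (\<lambda>x. X x $ c))"

definition jac_det :: "(real^2 \<Rightarrow> real^2) \<Rightarrow> real^2 \<Rightarrow> real" where
  "jac_det X x = det (matrix (frechet_derivative X (at x)))"

definition dVc :: "(real^2 \<Rightarrow> real^2) \<Rightarrow> real \<Rightarrow> real \<Rightarrow> int \<Rightarrow> int \<Rightarrow> int \<Rightarrow> int \<Rightarrow> real" where
  "dVc X dxi deta mx my i j =
     dxi * deta * \<bar>jac_det X (pt (of_int (i mod mx) * dxi) (of_int (j mod my) * deta))\<bar>"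

definition Fe :: "(real^2 \<Rightarrow> real^2) \<Rightarrow> real \<Rightarrow> real \<Rightarrow> int \<Rightarrow> int \<Rightarrow> (int \<Rightarrow> int \<Rightarrow> real^2)
                  \<Rightarrow> real \<Rightarrow> int \<Rightarrow> int \<Rightarrow> real" where
  "Fe X dxi deta mx my ue eps i j =
     (let i' = i mod mx; j' = j mod my;
          loc = pt ((of_int i' + 1/2) * dxi) (of_int j' * deta)
      in - (1 / eps) * (perp (X (loc + pt 0 (eps * deta)) - X (loc - pt 0 (eps * deta))) \<bullet> ue i' j'))"

definition Fn :: "(real^2 \<Rightarrow> real^2) \<Rightarrow> real \<Rightarrow> real \<Rightarrow> int \<Rightarrow> int \<Rightarrow> (int \<Rightarrow> int \<Rightarrow> real^2)
                  \<Rightarrow> real \<Rightarrow> int \<Rightarrow> int \<Rightarrow> real" where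
  "Fn X dxi deta mx my un eps i j =
     (let i' = i mod mx; j' = j mod my;
          loc = pt (of_int i' * dxi) ((of_int j' + 1/2) * deta)
      in (1 / eps) * (perp (X (loc + pt (eps * dxi) 0) - X (loc - pt (eps * dxi) 0)) \<bullet> un i' j'))"

text \<open>Discrete divergence. eps ranges over k + 1/2 for k < K; alpha k stands for alpha(k+1/2).
  Then i + eps - 1/2 = i + k and i - eps - 1/2 = i - k - 1.\<close>
definition DIV :: "(real^2 \<Rightarrow> real^2) \<Rightarrow> real \<Rightarrow> real \<Rightarrow> int \<Rightarrow> int \<Rightarrow> nat \<Rightarrow> (nat \<Rightarrow> real)
                  \<Rightarrow> (int \<Rightarrow> int \<Rightarrow> real^2) \<Rightarrow> (int \<Rightarrow> int \<Rightarrow> real^2) \<Rightarrow> int \<Rightarrow> int \<Rightarrow> real" where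
  "DIV X dxi deta mx my K alpha ue un i j =
     1 / (2 * dVc X dxi deta mx my i j) *
     (\<Sum>k<K. let eps = real k + 1/2 in alpha k *
        ( Fe X dxi deta mx my ue eps (i + int k) j - Fe X dxi deta mx my ue eps (i - int k - 1) j
        + Fn X dxi deta mx my un eps i (j + int k) - Fn X dxi deta mx my un eps i (j - int k - 1)))"

end

theory Submission
  imports Defs
begin

lemma pt_add: "pt a b + pt c d = pt (a + c) (b + d)"
  by (simp add: pt_def vec_eq_iff forall_2 vector_def)
lemma pt_diff: "pt a b - pt c d = pt (a - c) (b - d)"
  by (simp add: pt_def vec_eq_iff forall_2 vector_def)
lemma perp_diff: "perp (a - b) = perp a - perp b"
  by (simp add: perp_def vec_eq_iff forall_2 vector_def)

lemma shift_int:
  fixes f :: "real \<Rightarrow> real^2"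
  assumes "\<forall>a. f (a + p) - f a = c"
  shows "f (a + of_int n * p) = f a + of_int n *\<^sub>R c"
proof (induction n rule: int_induct[where k=0])
  case base then show ?case by simp
next
  case (step1 i)
  have "f (a + of_int (i + 1) * p) = f ((a + of_int i * p) + p)" by (simp add: algebra_simps)
  also have "\<dots> = f (a + of_int i * p) + c" using assms by (metis add_diff_cancel_left' diff_add_cancel)
  finally show ?case using step1 by (simp add: algebra_simps)
next
  case (step2 i)
  have "f (a + of_int i * p) = f ((a + of_int (i - 1) * p) + p)" by (simp add: algebra_simps)
  also have "\<dots> = f (a + of_int (i - 1) * p) + c" using assms by (metis add_diff_cancel_left' diff_add_cancel)
  finally show ?case using step2 by (simp add: algebra_simps)
qed

lemma shift2:
  fixes X :: "real^2 \<Rightarrow> real^2"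
  assumes "\<forall>a b. X (pt (a + P) b) - X (pt a b) = c1"
    and "\<forall>a b. X (pt a (b + Q)) - X (pt a b) = c2"
  shows "X (pt (a + of_int n * P) (b + of_int m * Q)) = X (pt a b) + of_int n *\<^sub>R c1 + of_int m *\<^sub>R c2"
proof -
  have "X (pt (a + of_int n * P) (b + of_int m * Q)) = X (pt (a + of_int n * P) b) + of_int m *\<^sub>R c2"
    using shift_int[of "\<lambda>t. X (pt (a + of_int n * P) t)" Q c2 b m] assms(2) by simp
  moreover have "X (pt (a + of_int n * P) b) = X (pt a b) + of_int n *\<^sub>R c1"
    using shift_int[of "\<lambda>t. X (pt t b)" P c1 a n] assms(1) by simp
  ultimately show ?thesis by simp
qed

lemma mod_of_int: "(m::int) > 0 \<Longrightarrow> (real_of_int (i mod m)) = real_of_int i - real_of_int m * real_of_int (i div m)"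
  by (metis minus_div_mult_eq_mod mult.commute of_int_diff of_int_mult)

lemma Fe_eq:
  assumes "\<forall>a b. X (pt (a + of_int mx * dxi) b) - X (pt a b) = c1"
    and "\<forall>a b. X (pt a (b + of_int my * deta)) - X (pt a b) = c2"
    and "mx > 0" "my > 0" and "ue (i mod mx) (j mod my) = c"
  shows "Fe X dxi deta mx my ue eps i j =
     - (1 / eps) * (perp (X (pt ((of_int i + 1/2) * dxi) (of_int j * deta + eps * deta))
                        - X (pt ((of_int i + 1/2) * dxi) (of_int j * deta - eps * deta))) \<bullet> c)"
proof -
  let ?n = "- (i div mx)" and ?m = "- (j div my)"
  have x: "(of_int (i mod mx) + 1/2) * dxi = (of_int i + 1/2) * dxi + of_int ?n * (of_int mx * dxi)"
    by (simp add: mod_of_int[OF assms(3), of i] algebra_simps)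
  have y1: "of_int (j mod my) * deta + eps * deta = (of_int j * deta + eps * deta) + of_int ?m * (of_int my * deta)"
    by (simp add: mod_of_int[OF assms(4), of j] algebra_simps)
  have y2: "of_int (j mod my) * deta - eps * deta = (of_int j * deta - eps * deta) + of_int ?m * (of_int my * deta)"
    by (simp add: mod_of_int[OF assms(4), of j] algebra_simps)
  show ?thesis
    unfolding Fe_def Let_def pt_add pt_diff
    apply (simp only: add_0_right diff_0_right)
    apply (simp only: x y1 y2 shift2[OF assms(1,2)] assms(5))
    by simp
qed

lemma Fn_eq:
  assumes "\<forall>a b. X (pt (a + of_int mx * dxi) b) - X (pt a b) = c1"
    and "\<forall>a b. X (pt a (b + of_int my * deta)) - X (pt a b) = c2"
    and "mx > 0" "my > 0" and "un (i mod mx) (j mod my) = c"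
  shows "Fn X dxi deta mx my un eps i j =
     (1 / eps) * (perp (X (pt (of_int i * dxi + eps * dxi) ((of_int j + 1/2) * deta))
                        - X (pt (of_int i * dxi - eps * dxi) ((of_int j + 1/2) * deta))) \<bullet> c)"
proof -
  let ?n = "- (i div mx)" and ?m = "- (j div my)"
  have y: "(of_int (j mod my) + 1/2) * deta = (of_int j + 1/2) * deta + of_int ?m * (of_int my * deta)"
    by (simp add: mod_of_int[OF assms(4), of j] algebra_simps)
  have x1: "of_int (i mod mx) * dxi + eps * dxi = (of_int i * dxi + eps * dxi) + of_int ?n * (of_int mx * dxi)"
    by (simp add: mod_of_int[OF assms(3), of i] algebra_simps)
  have x2: "of_int (i mod mx) * dxi - eps * dxi = (of_int i * dxi - eps * dxi) + of_int ?n * (of_int mx * dxi)"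
    by (simp add: mod_of_int[OF assms(3), of i] algebra_simps)
  show ?thesis
    unfolding Fn_def Let_def pt_add pt_diff
    apply (simp only: add_0_right diff_0_right)
    apply (simp only: x1 x2 y shift2[OF assms(1,2)] assms(5))
    by simp
qed

lemma sum_shift:
  fixes f :: "int \<Rightarrow> real"
  assumes "m > 0" and "\<forall>i. f (i mod m) = f i"
  shows "(\<Sum>i\<in>{0..<m}. f (i + a)) = (\<Sum>i\<in>{0..<m}. f i)"
proof -
  have "(\<Sum>i\<in>{0..<m}. f (i + a)) = (\<Sum>i\<in>{0..<m}. f ((i + a) mod m))"
    using assms(2) by simp
  also have "\<dots> = (\<Sum>i\<in>{0..<m}. f i)"
  proof (rule sum.reindex_bij_betw)
    show "bij_betw (\<lambda>i. (i + a) mod m) {0..<m} {0..<m}"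
      apply (rule bij_betw_byWitness[where f'="\<lambda>i. (i - a) mod m"])
      using assms(1) by (auto simp: mod_add_left_eq mod_diff_left_eq)
  qed
  finally show ?thesis .
qed

theorem mainTheorem2:
  fixes X :: "real^2 \<Rightarrow> real^2" and mx my :: int and dxi deta :: real
    and K :: nat and alpha :: "nat \<Rightarrow> real"
    and ue un :: "int \<Rightarrow> int \<Rightarrow> real^2"
  assumes "mx > 0" and "my > 0" and "dxi > 0" and "deta > 0"
    and "smooth_map X"
    and "\<forall>x. jac_det X x \<noteq> 0"
    and "\<exists>c. \<forall>a b. X (pt (a + of_int mx * dxi) b) - X (pt a b) = c"
    and "\<exists>c. \<forall>a b. X (pt a (b + of_int my * deta)) - X (pt a b) = c"
    and "K > 0"
  shows "(\<Sum>i\<in>{0..<mx}. \<Sum>j\<in>{0..<my}.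
            dVc X dxi deta mx my i j * DIV X dxi deta mx my K alpha ue un i j) = 0
         \<and> (\<forall>c. (\<forall>i\<in>{0..<mx}. \<forall>j\<in>{0..<my}. ue i j = c \<and> un i j = c)
            \<longrightarrow> (\<forall>i j. DIV X dxi deta mx my K alpha ue un i j = 0))"
proof
  obtain c1 where c1: "\<forall>a b. X (pt (a + of_int mx * dxi) b) - X (pt a b) = c1" using assms(7) by blast
  obtain c2 where c2: "\<forall>a b. X (pt a (b + of_int my * deta)) - X (pt a b) = c2" using assms(8) by blast
  let ?Fe = "\<lambda>k. Fe X dxi deta mx my ue (real k + 1/2)"
  let ?Fn = "\<lambda>k. Fn X dxi deta mx my un (real k + 1/2)"
  let ?S = "\<lambda>i j. \<Sum>k<K. alpha k * (?Fe k (i + int k) j - ?Fe k (i - int k - 1) j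
        + ?Fn k i (j + int k) - ?Fn k i (j - int k - 1))"
  have dV: "dVc X dxi deta mx my i j \<noteq> 0" for i j
    using assms(3,4,6) by (simp add: dVc_def)
  have DIVeq: "DIV X dxi deta mx my K alpha ue un i j = 1 / (2 * dVc X dxi deta mx my i j) * ?S i j" for i j
    by (simp add: DIV_def Let_def)
  have Feper: "?Fe k (i mod mx) j = ?Fe k i j" for k i j by (simp add: Fe_def)
  have Fnper: "?Fn k i (j mod my) = ?Fn k i j" for k i j by (simp add: Fn_def)
  have sFe: "(\<Sum>i\<in>{0..<mx}. \<Sum>j\<in>{0..<my}. ?Fe k (i + a) j) = (\<Sum>i\<in>{0..<mx}. \<Sum>j\<in>{0..<my}. ?Fe k i j)" for k a
    using sum_shift[OF assms(1), of "\<lambda>i. \<Sum>j\<in>{0..<my}. ?Fe k i j" a] Feper by simp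
  have sFn: "(\<Sum>i\<in>{0..<mx}. \<Sum>j\<in>{0..<my}. ?Fn k i (j + a)) = (\<Sum>i\<in>{0..<mx}. \<Sum>j\<in>{0..<my}. ?Fn k i j)" for k a
    apply (rule sum.cong[OF refl])
    using sum_shift[OF assms(2), of "\<lambda>j. ?Fn k _ j" a] Fnper by simp
  have "(\<Sum>i\<in>{0..<mx}. \<Sum>j\<in>{0..<my}.
            dVc X dxi deta mx my i j * DIV X dxi deta mx my K alpha ue un i j)
        = (\<Sum>i\<in>{0..<mx}. \<Sum>j\<in>{0..<my}. ?S i j) / 2"
  proof -
    have pw: "dVc X dxi deta mx my i j * DIV X dxi deta mx my K alpha ue un i j = ?S i j / 2" for i j
    proof -
      have "\<And>d s. (d::real) \<noteq> 0 \<Longrightarrow> d * (1 / (2 * d) * s) = s / 2" by (simp add: field_simps)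
      then show ?thesis unfolding DIVeq using dV by blast
    qed
    show ?thesis by (simp only: pw sum_divide_distrib)
  qed
  also have "(\<Sum>i\<in>{0..<mx}. \<Sum>j\<in>{0..<my}. ?S i j) = (\<Sum>k<K. alpha k *
       ((\<Sum>i\<in>{0..<mx}. \<Sum>j\<in>{0..<my}. ?Fe k (i + int k) j)
       - (\<Sum>i\<in>{0..<mx}. \<Sum>j\<in>{0..<my}. ?Fe k (i + (- int k - 1)) j)
       + (\<Sum>i\<in>{0..<mx}. \<Sum>j\<in>{0..<my}. ?Fn k i (j + int k))
       - (\<Sum>i\<in>{0..<mx}. \<Sum>j\<in>{0..<my}. ?Fn k i (j + (- int k - 1)))))"
    by (simp add: sum_distrib_left sum_subtractf sum.distrib sum.swap[of _ "{..<K}"] algebra_simps)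
  also have "\<dots> = 0" by (simp only: sFe sFn) simp
  finally show "(\<Sum>i\<in>{0..<mx}. \<Sum>j\<in>{0..<my}.
            dVc X dxi deta mx my i j * DIV X dxi deta mx my K alpha ue un i j) = 0" by simp
  show "\<forall>c. (\<forall>i\<in>{0..<mx}. \<forall>j\<in>{0..<my}. ue i j = c \<and> un i j = c)
            \<longrightarrow> (\<forall>i j. DIV X dxi deta mx my K alpha ue un i j = 0)"
  proof (intro allI impI)
    fix c i j
    assume H: "\<forall>i\<in>{0..<mx}. \<forall>j\<in>{0..<my}. ue i j = c \<and> un i j = c"
    have ue: "ue (a mod mx) (b mod my) = c" and un: "un (a mod mx) (b mod my) = c" for a b
      using H assms(1,2) by auto
    have "alpha k * (?Fe k (i + int k) j - ?Fe k (i - int k - 1) j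
        + ?Fn k i (j + int k) - ?Fn k i (j - int k - 1)) = 0" for k
    proof -
      define e where "e = real k + 1/2"
      have e0: "e \<noteq> 0" unfolding e_def by (simp add: add_pos_pos)
      define ip where "ip = of_int i * dxi + e * dxi"
      define im where "im = of_int i * dxi - e * dxi"
      define jp where "jp = of_int j * deta + e * deta"
      define jm where "jm = of_int j * deta - e * deta"
      have a1: "(of_int (i + int k) + 1/2) * dxi = ip" unfolding ip_def e_def by (simp add: algebra_simps)
      have a2: "(of_int (i - int k - 1) + 1/2) * dxi = im" unfolding im_def e_def by (simp add: algebra_simps)
      have a3: "(of_int (j + int k) + 1/2) * deta = jp" unfolding jp_def e_def by (simp add: algebra_simps)
      have a4: "(of_int (j - int k - 1) + 1/2) * deta = jm" unfolding jm_def e_def by (simp add: algebra_simps)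
      show ?thesis
        unfolding e_def[symmetric]
        apply (simp only: Fe_eq[where ue=ue, OF c1 c2 assms(1,2) ue] Fn_eq[where un=un, OF c1 c2 assms(1,2) un])
        apply (simp only: a1 a2 a3 a4 ip_def[symmetric] im_def[symmetric] jp_def[symmetric] jm_def[symmetric])
        using e0 by (simp add: perp_diff inner_diff_left field_simps)
    qed
    note z = this
    show "DIV X dxi deta mx my K alpha ue un i j = 0"
      unfolding DIVeq by (subst sum.neutral) (use z in auto)
  qed
qed

end
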